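(* Let $\mathfrak{M}=(S,\mathcal{L})$ be a partial Steiner triple system and let $H_1,H_2$ be distinct hyperplanes of $\mathfrak{M}$. Then the set $$H_1\pitchfork H_2:=(H_1\cap H_2)\cup\big((S\setminus H_1)\cap(S\setminus H_2)\big)=S\setminus(H_1\,\triangle\, H_2)$$ is also a hyperplane of $\mathfrak{M}$.
   Context: A partial Steiner triple system (PSTS) is a partial linear space $(S,\mathcal{L})$ (any two distinct points lie on at most one line) in which every line has exactly $3$ points and every point lies on the same number of lines. A subspace of $\mathfrak{M}$ is a set $U\subseteq S$ such that every line having at least two points in $U$ is contained in $U$. A hyperplane of $\mathfrak{M}$ is a proper subspace $H\subsetneq S$ which meets every line of $\mathfrak{M}$. $\triangle$ denotes symmetric difference. *)

theory Defs
  imports Main "HOL-Library.Equipollence"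
begin

definition partial_linear_space :: "'a set \<Rightarrow> 'a set set \<Rightarrow> bool" where
  "partial_linear_space S L \<longleftrightarrow>
     (\<forall>l\<in>L. l \<subseteq> S) \<and>
     (\<forall>p\<in>S. \<forall>q\<in>S. p \<noteq> q \<longrightarrow> (\<forall>l1\<in>L. \<forall>l2\<in>L. p \<in> l1 \<and> q \<in> l1 \<and> p \<in> l2 \<and> q \<in> l2 \<longrightarrow> l1 = l2))"

definition psts :: "'a set \<Rightarrow> 'a set set \<Rightarrow> bool" where
  "psts S L \<longleftrightarrow> partial_linear_space S L \<and>
     (\<forall>l\<in>L. finite l \<and> card l = 3) \<and>
     (\<forall>p\<in>S. \<forall>q\<in>S. {l\<in>L. p \<in> l} \<approx> {l\<in>L. q \<in> l})"

definition subspace :: "'a set \<Rightarrow> 'a set set \<Rightarrow> 'a set \<Rightarrow> bool" where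
  "subspace S L U \<longleftrightarrow> U \<subseteq> S \<and>
     (\<forall>l\<in>L. (\<exists>p q. p \<noteq> q \<and> p \<in> l \<inter> U \<and> q \<in> l \<inter> U) \<longrightarrow> l \<subseteq> U)"

definition hyperplane :: "'a set \<Rightarrow> 'a set set \<Rightarrow> 'a set \<Rightarrow> bool" where
  "hyperplane S L H \<longleftrightarrow> subspace S L H \<and> H \<subset> S \<and> (\<forall>l\<in>L. l \<inter> H \<noteq> {})"

end

theory Submission
  imports Defs
begin

lemma hyp_line:
  assumes "hyperplane S L H" "l \<in> L" "l = {a,b,c}" "a \<noteq> b" "b \<noteq> c" "a \<noteq> c"
  shows "(a \<in> H \<or> b \<in> H \<or> c \<in> H) \<and> (a \<in> H \<longrightarrow> b \<in> H \<longrightarrow> c \<in> H)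
    \<and> (a \<in> H \<longrightarrow> c \<in> H \<longrightarrow> b \<in> H) \<and> (b \<in> H \<longrightarrow> c \<in> H \<longrightarrow> a \<in> H)"
proof -
  have sub: "\<forall>l\<in>L. (\<exists>p q. p \<noteq> q \<and> p \<in> l \<inter> H \<and> q \<in> l \<inter> H) \<longrightarrow> l \<subseteq> H"
    and m: "l \<inter> H \<noteq> {}" using assms(1,2) unfolding hyperplane_def subspace_def by auto
  have s: "(\<exists>p q. p \<noteq> q \<and> p \<in> l \<inter> H \<and> q \<in> l \<inter> H) \<Longrightarrow> l \<subseteq> H" using sub assms(2) by blast
  show ?thesis
  proof (intro conjI impI)
    show "a \<in> H \<or> b \<in> H \<or> c \<in> H" using m assms(3) by auto
  next
    assume "a \<in> H" "b \<in> H" then show "c \<in> H" using s[of] assms(3,4) by auto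
  next
    assume "a \<in> H" "c \<in> H" then show "b \<in> H" using s assms(3,6) by auto
  next
    assume "b \<in> H" "c \<in> H" then show "a \<in> H" using s assms(3,5) by auto
  qed
qed

lemma prop6:
  assumes "(a1 \<or> b1 \<or> c1) \<and> (a1 \<longrightarrow> b1 \<longrightarrow> c1) \<and> (a1 \<longrightarrow> c1 \<longrightarrow> b1) \<and> (b1 \<longrightarrow> c1 \<longrightarrow> a1)"
    "(a2 \<or> b2 \<or> c2) \<and> (a2 \<longrightarrow> b2 \<longrightarrow> c2) \<and> (a2 \<longrightarrow> c2 \<longrightarrow> b2) \<and> (b2 \<longrightarrow> c2 \<longrightarrow> a2)"
  shows "(a1 = a2) \<or> (b1 = b2) \<or> (c1 = c2)"
    and "(a1 = a2) \<Longrightarrow> (b1 = b2) \<Longrightarrow> (c1 = c2)"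
    and "(a1 = a2) \<Longrightarrow> (c1 = c2) \<Longrightarrow> (b1 = b2)"
    and "(b1 = b2) \<Longrightarrow> (c1 = c2) \<Longrightarrow> (a1 = a2)"
  using assms by blast+


theorem proposition1p5:
  fixes S :: "'a set" and L :: "'a set set" and H1 H2 :: "'a set"
  assumes "psts S L"
    and "hyperplane S L H1" and "hyperplane S L H2" and "H1 \<noteq> H2"
  shows "hyperplane S L ((H1 \<inter> H2) \<union> ((S - H1) \<inter> (S - H2)))"
proof -
  define K where "K = (H1 \<inter> H2) \<union> ((S - H1) \<inter> (S - H2))"
  have HS: "H1 \<subseteq> S" "H2 \<subseteq> S" using assms(2,3) unfolding hyperplane_def by auto
  have Kiff: "x \<in> S \<Longrightarrow> x \<in> K \<longleftrightarrow> (x \<in> H1) = (x \<in> H2)" for x unfolding K_def by blast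
  have KS: "K \<subseteq> S" unfolding K_def using HS by blast
  have lS: "\<And>l. l \<in> L \<Longrightarrow> l \<subseteq> S" using assms(1) unfolding psts_def partial_linear_space_def by auto
  have line: "\<And>l. l \<in> L \<Longrightarrow> \<exists>a b c. l = {a,b,c} \<and> a \<noteq> b \<and> b \<noteq> c \<and> a \<noteq> c"
    using assms(1) unfolding psts_def by (simp add: card_3_iff)
  have key: "(a \<in> K \<or> b \<in> K \<or> c \<in> K) \<and> (a \<in> K \<longrightarrow> b \<in> K \<longrightarrow> c \<in> K)
    \<and> (a \<in> K \<longrightarrow> c \<in> K \<longrightarrow> b \<in> K) \<and> (b \<in> K \<longrightarrow> c \<in> K \<longrightarrow> a \<in> K)"
    if l: "l \<in> L" and abc: "l = {a,b,c}" "a \<noteq> b" "b \<noteq> c" "a \<noteq> c" for l a b c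
  proof -
    have s: "a \<in> S" "b \<in> S" "c \<in> S" using lS[OF l] abc by auto
    note P = prop6[OF hyp_line[OF assms(2) l abc] hyp_line[OF assms(3) l abc]]
    show ?thesis unfolding Kiff[OF s(1)] Kiff[OF s(2)] Kiff[OF s(3)] using P by blast
  qed
  have meets: "l \<inter> K \<noteq> {}" if l: "l \<in> L" for l
  proof -
    obtain a b c where abc: "l = {a,b,c}" "a \<noteq> b" "b \<noteq> c" "a \<noteq> c" using line[OF l] by blast
    have "a \<in> K \<or> b \<in> K \<or> c \<in> K" using key[OF l abc] by blast
    then show ?thesis using abc(1) by blast
  qed
  have sub: "l \<subseteq> K" if l: "l \<in> L" and pq: "p \<noteq> q" "p \<in> l \<inter> K" "q \<in> l \<inter> K" for l p q
  proof -
    obtain a b c where abc: "l = {a,b,c}" "a \<noteq> b" "b \<noteq> c" "a \<noteq> c" using line[OF l] by blast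
    have "(a \<in> K \<and> b \<in> K) \<or> (a \<in> K \<and> c \<in> K) \<or> (b \<in> K \<and> c \<in> K)"
      using pq abc by auto
    then have "a \<in> K \<and> b \<in> K \<and> c \<in> K" using key[OF l abc] by blast
    then show ?thesis using abc(1) by blast
  qed
  have ne: "K \<noteq> S"
  proof
    assume "K = S"
    hence "H1 = H2" using HS unfolding K_def by blast
    thus False using assms(4) by simp
  qed
  have "hyperplane S L K" unfolding hyperplane_def subspace_def
    using meets sub ne KS by blast
  thus ?thesis unfolding K_def .
qed

end
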